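(* Let $M$ be an involutive monoid. The tuple category $T(M)$ has the structure of a $\mathcal{D}_{\mathbf{Cat}}$-algebra; that is, it is an $E_\infty$-algebra in $\mathbf{Cat}$.
   Context: An involutive monoid is a monoid $M$ with a map $m\mapsto\overline m$ with $\overline{\overline m}=m$, $\overline{mn}=\overline n\,\overline m$, $\overline 1=1$. Let $C_2=\{1,t\}$. The category $\Delta H_+$: objects $[n]=\{0,\dots,n\}$ for $n\ge -1$ (with $[-1]=\emptyset$); a morphism $f:[n]\to[m]$ is a map of sets with a total order on each fibre $f^{-1}(i)$ and a $C_2$-label on each element of $[n]$; the composite $g\circ f$ has fibre over $i$ equal to the concatenation, in the order of $g^{-1}(i)$, of the fibres $f^{-1}(j)$, each replaced by $f^{-1}(j)^t$ (order reversed, labels multiplied by $t$) when $j$ has label $t$ in $g$. For $f:[p-1]\to[q-1]$ and $\mathbf m=(m_0,\dots,m_{p-1})\in M^p$, let $\mathsf{H}_M(f)(\mathbf m)=(b_0,\dots,b_{q-1})$ with $b_i$ the product, in the order of $f^{-1}(i)$, of $m_x$ (label $1$) or $\overline{m_x}$ (label $t$), empty product $1$. The tuple category $T(M)$ has as objects all finite (possibly empty) tuples of elements of $M$; for each $f\in\mathrm{Hom}_{\Delta H_+}([p-1],[q-1])$, $p,q\ge0$, and $\mathbf m\in M^p$ there is a morphism $(f,\mathbf m):\mathbf m\to\mathsf H_M(f)(\mathbf m)$, composition being induced by composition in $\Delta H_+$. The categorical Barratt–Eccles operad $\mathcal D_{\mathbf{Cat}}$ has $\mathcal D_{\mathbf{Cat}}(m)=\mathbb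 E\Sigma_m$ (objects the elements of $\Sigma_m$, a unique morphism between any two objects), with composition on objects $(\sigma,\tau_1,\dots,\tau_m)\mapsto\tau_{\sigma^{-1}(1)}\times\cdots\times\tau_{\sigma^{-1}(m)}$ (block permutation), and $\Sigma_m$ acting by right multiplication; it is an $E_\infty$-operad in $\mathbf{Cat}$ with the Thomason model structure. *)

theory Defs
  imports "HOL-Combinatorics.Permutations"
begin

definition involution :: "('m::monoid_mult \<Rightarrow> 'm) \<Rightarrow> bool" where
  "involution bar \<longleftrightarrow> (\<forall>m. bar (bar m) = m) \<and> (\<forall>m n. bar (m * n) = bar n * bar m) \<and> bar 1 = 1"

text \<open>A morphism [p-1] -> [q-1] is encoded as a list of length q; entry i is the fibre
  over i, listed in its total order, each element paired with its C_2-label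
  (True = t, False = 1).\<close>
type_synonym dmor = "(nat \<times> bool) list list"

definition dhom :: "nat \<Rightarrow> nat \<Rightarrow> dmor set" where
  "dhom p q = {F. length F = q \<and> distinct (map fst (concat F)) \<and> set (map fst (concat F)) = {0..<p}}"

definition flipfib :: "(nat \<times> bool) list \<Rightarrow> (nat \<times> bool) list" where
  "flipfib xs = rev (map (\<lambda>(x, e). (x, \<not> e)) xs)"

definition dcomp :: "dmor \<Rightarrow> dmor \<Rightarrow> dmor" where
  "dcomp G F = map (\<lambda>fib. concat (map (\<lambda>(j, e). if e then flipfib (F ! j) else F ! j) fib)) G"

definition did :: "nat \<Rightarrow> dmor" where
  "did p = map (\<lambda>i. [(i, False)]) [0..<p]"

definition HM :: "('m::monoid_mult \<Rightarrow> 'm) \<Rightarrow> dmor \<Rightarrow> 'm list \<Rightarrow> 'm list" where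
  "HM bar F ms = map (\<lambda>fib. prod_list (map (\<lambda>(x, e). if e then bar (ms ! x) else ms ! x) fib)) F"

record ('o, 'a) cat =
  Ob :: "'o set"
  Ar :: "'a set"
  Dom :: "'a \<Rightarrow> 'o"
  Cod :: "'a \<Rightarrow> 'o"
  Id :: "'o \<Rightarrow> 'a"
  Comp :: "'a \<Rightarrow> 'a \<Rightarrow> 'a"   \<comment> \<open>Comp g f = g \<circ> f\<close>

definition category :: "('o, 'a) cat \<Rightarrow> bool" where
  "category C \<longleftrightarrow>
     (\<forall>x\<in>Ob C. Id C x \<in> Ar C \<and> Dom C (Id C x) = x \<and> Cod C (Id C x) = x) \<and>
     (\<forall>f\<in>Ar C. Dom C f \<in> Ob C \<and> Cod C f \<in> Ob C) \<and>
     (\<forall>f\<in>Ar C. \<forall>g\<in>Ar C. Cod C f = Dom C g \<longrightarrow>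
         Comp C g f \<in> Ar C \<and> Dom C (Comp C g f) = Dom C f \<and> Cod C (Comp C g f) = Cod C g) \<and>
     (\<forall>f\<in>Ar C. Comp C f (Id C (Dom C f)) = f \<and> Comp C (Id C (Cod C f)) f = f) \<and>
     (\<forall>f\<in>Ar C. \<forall>g\<in>Ar C. \<forall>h\<in>Ar C. Cod C f = Dom C g \<longrightarrow> Cod C g = Dom C h \<longrightarrow>
         Comp C h (Comp C g f) = Comp C (Comp C h g) f)"

definition tuple_cat :: "('m::monoid_mult \<Rightarrow> 'm) \<Rightarrow> ('m list, dmor \<times> 'm list) cat" where
  "tuple_cat bar =
     \<lparr> Ob = UNIV,
       Ar = {(F, ms). \<exists>q. F \<in> dhom (length ms) q},
       Dom = (\<lambda>(F, ms). ms),
       Cod = (\<lambda>(F, ms). HM bar F ms),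
       Id = (\<lambda>ms. (did (length ms), ms)),
       Comp = (\<lambda>(G, ns) (F, ms). (dcomp G F, ms)) \<rparr>"

text \<open>Objects of E Sigma_m: permutations of {0..<m}; a morphism sigma -> sigma' is the pair
  (sigma, sigma') (unique morphism).\<close>
definition perms :: "nat \<Rightarrow> (nat \<Rightarrow> nat) set" where
  "perms m = {\<sigma>. \<sigma> permutes {0..<m}}"

definition offs :: "nat list \<Rightarrow> nat \<Rightarrow> nat" where
  "offs js k = sum_list (take k js)"

text \<open>Operad composition gamma(sigma; tau_1, ..., tau_k) with arities js = [j_1,...,j_k]:
  the block permutation (tau_{sigma^-1(1)} x ... x tau_{sigma^-1(k)}) composed with the
  permutation of blocks given by sigma.  Input b of block k goes to output position
  (sum of j_{sigma^-1(i)} for i < sigma k) + tau_k(b).\<close>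
definition gamma :: "(nat \<Rightarrow> nat) \<Rightarrow> (nat \<Rightarrow> nat) list \<Rightarrow> nat list \<Rightarrow> (nat \<Rightarrow> nat)" where
  "gamma \<sigma> \<tau>s js a =
     (if a < sum_list js then
        (let k = (THE k. k < length js \<and> offs js k \<le> a \<and> a < offs js (Suc k))
         in (\<Sum>i<\<sigma> k. js ! inv \<sigma> i) + (\<tau>s ! k) (a - offs js k))
      else a)"

definition act :: "(nat \<Rightarrow> nat) \<Rightarrow> 'x list \<Rightarrow> 'x list" where
  "act \<rho> xs = map (\<lambda>i. xs ! inv \<rho> i) [0..<length xs]"

text \<open>A D_Cat-algebra structure on a category C: functors
  theta_m : E Sigma_m x C^m -> C for all m (m = length of the list), given on objects by thO
  and on morphisms by thA (thA sigma sigma' phis is the image of ((sigma,sigma'), phis)),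
  satisfying unit, equivariance and associativity on objects and on morphisms.\<close>
definition Dcat_algebra ::
  "('o, 'a) cat \<Rightarrow> ((nat \<Rightarrow> nat) \<Rightarrow> 'o list \<Rightarrow> 'o) \<Rightarrow> ((nat \<Rightarrow> nat) \<Rightarrow> (nat \<Rightarrow> nat) \<Rightarrow> 'a list \<Rightarrow> 'a) \<Rightarrow> bool" where
  "Dcat_algebra C thO thA \<longleftrightarrow>
     category C \<and>
     \<comment> \<open>functoriality of each theta_m\<close>
     (\<forall>\<sigma> xs. \<sigma> \<in> perms (length xs) \<and> set xs \<subseteq> Ob C \<longrightarrow> thO \<sigma> xs \<in> Ob C) \<and>
     (\<forall>\<sigma> \<sigma>' fs. \<sigma> \<in> perms (length fs) \<and> \<sigma>' \<in> perms (length fs) \<and> set fs \<subseteq> Ar C \<longrightarrow>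
         thA \<sigma> \<sigma>' fs \<in> Ar C \<and>
         Dom C (thA \<sigma> \<sigma>' fs) = thO \<sigma> (map (Dom C) fs) \<and>
         Cod C (thA \<sigma> \<sigma>' fs) = thO \<sigma>' (map (Cod C) fs)) \<and>
     (\<forall>\<sigma> xs. \<sigma> \<in> perms (length xs) \<and> set xs \<subseteq> Ob C \<longrightarrow>
         thA \<sigma> \<sigma> (map (Id C) xs) = Id C (thO \<sigma> xs)) \<and>
     (\<forall>\<sigma> \<sigma>' \<sigma>'' fs gs. \<sigma> \<in> perms (length fs) \<and> \<sigma>' \<in> perms (length fs) \<and> \<sigma>'' \<in> perms (length fs) \<and>
         length gs = length fs \<and> set fs \<subseteq> Ar C \<and> set gs \<subseteq> Ar C \<and> map (Dom C) gs = map (Cod C) fs \<longrightarrow>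
         Comp C (thA \<sigma>' \<sigma>'' gs) (thA \<sigma> \<sigma>' fs) = thA \<sigma> \<sigma>'' (map2 (Comp C) gs fs)) \<and>
     \<comment> \<open>unit\<close>
     (\<forall>x\<in>Ob C. thO id [x] = x) \<and>
     (\<forall>f\<in>Ar C. thA id id [f] = f) \<and>
     \<comment> \<open>equivariance (right action of Sigma_m)\<close>
     (\<forall>\<sigma> \<rho> xs. \<sigma> \<in> perms (length xs) \<and> \<rho> \<in> perms (length xs) \<and> set xs \<subseteq> Ob C \<longrightarrow>
         thO (\<sigma> \<circ> \<rho>) xs = thO \<sigma> (act \<rho> xs)) \<and>
     (\<forall>\<sigma> \<sigma>' \<rho> fs. \<sigma> \<in> perms (length fs) \<and> \<sigma>' \<in> perms (length fs) \<and> \<rho> \<in> perms (length fs) \<and>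
         set fs \<subseteq> Ar C \<longrightarrow>
         thA (\<sigma> \<circ> \<rho>) (\<sigma>' \<circ> \<rho>) fs = thA \<sigma> \<sigma>' (act \<rho> fs)) \<and>
     \<comment> \<open>associativity\<close>
     (\<forall>\<sigma> \<tau>s xss. \<sigma> \<in> perms (length xss) \<and> length \<tau>s = length xss \<and>
         (\<forall>i<length xss. \<tau>s ! i \<in> perms (length (xss ! i)) \<and> set (xss ! i) \<subseteq> Ob C) \<longrightarrow>
         thO \<sigma> (map2 thO \<tau>s xss) = thO (gamma \<sigma> \<tau>s (map length xss)) (concat xss)) \<and>
     (\<forall>\<sigma> \<sigma>' \<tau>s \<tau>s' fss. \<sigma> \<in> perms (length fss) \<and> \<sigma>' \<in> perms (length fss) \<and>
         length \<tau>s = length fss \<and> length \<tau>s' = length fss \<and>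
         (\<forall>i<length fss. \<tau>s ! i \<in> perms (length (fss ! i)) \<and> \<tau>s' ! i \<in> perms (length (fss ! i)) \<and>
              set (fss ! i) \<subseteq> Ar C) \<longrightarrow>
         thA \<sigma> \<sigma>' (map (\<lambda>i. thA (\<tau>s ! i) (\<tau>s' ! i) (fss ! i)) [0..<length fss]) =
         thA (gamma \<sigma> \<tau>s (map length fss)) (gamma \<sigma>' \<tau>s' (map length fss)) (concat fss))"

end

theory Submission
  imports Defs
begin

lemma act_length[simp]: "length (act s xs) = length xs"
  by (simp add: act_def)

lemma act_nth[simp]: "i < length xs \<Longrightarrow> act s xs ! i = xs ! inv s i"
  by (simp add: act_def)

lemma perm_lt: "(s::nat\<Rightarrow>nat) permutes {0..<n} \<Longrightarrow> k < n \<Longrightarrow> s k < n"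
  using permutes_in_image[of s "{0..<n}" k] by auto

lemma perm_inv_lt: "(s::nat\<Rightarrow>nat) permutes {0..<n} \<Longrightarrow> k < n \<Longrightarrow> inv s k < n"
  using permutes_inv perm_lt by blast

lemma act_map: "s permutes {0..<length xs} \<Longrightarrow> act s (map f xs) = map f (act s xs)"
  by (rule nth_equalityI) (auto simp: perm_inv_lt)

lemma act_permute_list: "act s xs = permute_list (inv s) xs"
  by (simp add: act_def permute_list_def)


lemma act_nth_perm: "s permutes {0..<length xs} \<Longrightarrow> k < length xs \<Longrightarrow> act s xs ! (s k) = xs ! k"
  by (simp add: perm_lt permutes_inverses)

lemma act_mset: "s permutes {0..<length xs} \<Longrightarrow> mset (act s xs) = mset xs"
  unfolding act_permute_list
  by (rule mset_permute_list) (simp add: atLeast0LessThan permutes_inv)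

lemma act_sum_list: "s permutes {0..<length xs} \<Longrightarrow> sum_list (act s xs) = sum_list (xs::'a::comm_monoid_add list)"
  by (metis act_mset sum_mset_sum_list)

lemma act_upt: "s permutes {0..<n} \<Longrightarrow> act s (map f [0..<n]) = map (\<lambda>k. f (inv s k)) [0..<n]"
  by (rule nth_equalityI) (auto simp: perm_inv_lt)

lemma act_comp: "s permutes {0..<length xs} \<Longrightarrow> r permutes {0..<length xs} \<Longrightarrow>
   act (s \<circ> r) xs = act s (act r xs)"
  apply (rule nth_equalityI)
   apply (auto simp: perm_inv_lt o_inv_distrib permutes_bij)
  done

lemma act_id[simp]: "act id xs = xs"
  by (rule nth_equalityI) auto

section \<open>List offsets\<close>

lemma concat_nth_offs:
  "i < length Cs \<Longrightarrow> x < length (Cs ! i) \<Longrightarrow> concat Cs ! (offs (map length Cs) i + x) = Cs ! i ! x"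
proof (induction Cs arbitrary: i)
  case (Cons C Cs)
  then show ?case by (cases i) (auto simp: offs_def nth_append)
qed simp

lemma take_concat_offs:
  "i < length Cs \<Longrightarrow> x \<le> length (Cs ! i) \<Longrightarrow>
   take (offs (map length Cs) i + x) (concat Cs) = concat (take i Cs) @ take x (Cs ! i)"
proof (induction Cs arbitrary: i)
  case (Cons C Cs)
  then show ?case by (cases i) (auto simp: offs_def)
qed simp

lemma offs_snoc: "j \<le> length ls \<Longrightarrow> offs (ls @ [a]) j = offs ls j"
  by (simp add: offs_def)

lemma offs_Suc: "k < length ls \<Longrightarrow> offs ls (Suc k) = offs ls k + ls ! k"
  by (simp add: offs_def take_Suc_conv_app_nth)

lemma offs_mono: "m \<le> n \<Longrightarrow> offs ls m \<le> offs (ls::nat list) n"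
proof -
  assume "m \<le> n"
  then obtain d where "n = m + d" using le_Suc_ex by blast
  then show ?thesis by (simp add: offs_def take_add)
qed

lemma offs_le_sum: "offs ls k \<le> sum_list (ls::nat list)"
proof -
  have "sum_list ls = sum_list (take k ls) + sum_list (drop k ls)"
    by (metis append_take_drop_id sum_list_append)
  then show ?thesis by (simp add: offs_def)
qed

lemma offs_length: "offs ls (length ls) = sum_list ls"
  by (simp add: offs_def)

lemma block_lt_sum: "i < length ls \<Longrightarrow> b < ls ! i \<Longrightarrow> offs ls i + b < sum_list (ls::nat list)"
  using offs_Suc[of i ls] offs_le_sum[of ls "Suc i"] by simp

lemma upt_blocks:
  "[0..<sum_list ls] = concat (map (\<lambda>j. [offs ls j..<offs ls j + ls ! j]) [0..<length ls])"
proof (induction ls rule: rev_induct)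
  case (snoc a ls)
  have A: "map (\<lambda>j. [offs (ls @ [a]) j..<offs (ls @ [a]) j + (ls @ [a]) ! j]) [0..<length ls]
      = map (\<lambda>j. [offs ls j..<offs ls j + ls ! j]) [0..<length ls]"
    by (rule map_cong) (auto simp: offs_snoc nth_append)
  have B: "offs (ls @ [a]) (length ls) = sum_list ls" by (simp add: offs_snoc offs_length)
  show ?case by (simp add: A B snoc[symmetric] upt_add_eq_append[of 0 "sum_list ls"])
qed simp

lemma block_decomp:
  assumes "a < sum_list (ls::nat list)"
  obtains i b where "i < length ls" "b < ls ! i" "a = offs ls i + b"
proof -
  have "a \<in> set [0..<sum_list ls]" using assms by simp
  then obtain j where j: "j < length ls" "a \<in> {offs ls j..<offs ls j + ls ! j}"
    unfolding upt_blocks by auto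
  show ?thesis using that[of j "a - offs ls j"] j by auto
qed

lemma the_block:
  assumes i: "i < length ls" and b: "b < ls ! i"
  shows "(THE k. k < length ls \<and> offs ls k \<le> offs ls i + b \<and> offs ls i + b < offs ls (Suc k)) = i"
proof (rule the_equality)
  show "i < length ls \<and> offs ls i \<le> offs ls i + b \<and> offs ls i + b < offs ls (Suc i)"
    using i b offs_Suc[OF i] by simp
next
  fix k assume k: "k < length ls \<and> offs ls k \<le> offs ls i + b \<and> offs ls i + b < offs ls (Suc k)"
  show "k = i"
  proof (rule ccontr)
    assume "k \<noteq> i"
    then consider "Suc k \<le> i" | "Suc i \<le> k" by linarith
    then show False
    proof cases
      case 1 then show False using offs_mono[OF 1, of ls] k by simp
    next
      case 2 then show False using offs_mono[OF 2, of ls] k offs_Suc[OF i] b by simp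
    qed
  qed
qed

lemma sum_list_take_nth: "m \<le> length xs \<Longrightarrow> sum_list (take m xs) = (\<Sum>j<m. xs ! j)"
proof (induction m)
  case (Suc m)
  then show ?case by (simp add: take_Suc_conv_app_nth)
qed simp

lemma sum_list_concat_map: "sum_list (concat xss) = sum_list (map sum_list (xss::'a::monoid_add list list))"
  by (induction xss) auto

section \<open>Gamma\<close>

definition spos :: "(nat \<Rightarrow> nat) \<Rightarrow> nat list \<Rightarrow> nat \<Rightarrow> nat" where
  "spos s ls k = offs (act s ls) (s k)"

lemma concat_act_nth:
  assumes s: "s permutes {0..<length Bs}" and k: "k < length Bs" and x: "x < length (Bs ! k)"
  shows "concat (act s Bs) ! (spos s (map length Bs) k + x) = Bs ! k ! x"
proof -
  have "spos s (map length Bs) k = offs (map length (act s Bs)) (s k)"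
    unfolding spos_def using s by (simp add: act_map)
  moreover have "s k < length (act s Bs)" using perm_lt[OF s k] by simp
  moreover have "act s Bs ! s k = Bs ! k" using act_nth_perm[OF s k] .
  ultimately show ?thesis using concat_nth_offs[of "s k" "act s Bs" x] x by simp
qed

lemma gamma_block:
  assumes s: "s permutes {0..<length ls}" and i: "i < length ls" and b: "b < ls ! i"
  shows "gamma s ts ls (offs ls i + b) = spos s ls i + (ts ! i) b"
proof -
  have lt: "offs ls i + b < sum_list ls" using block_lt_sum[OF i b] .
  have si: "s i < length ls" using perm_lt[OF s i] .
  have "(\<Sum>j<s i. ls ! inv s j) = (\<Sum>j<s i. act s ls ! j)"
    using si by (intro sum.cong) auto
  also have "\<dots> = spos s ls i"
    unfolding spos_def offs_def using si by (simp add: sum_list_take_nth)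
  finally show ?thesis using lt by (simp add: gamma_def the_block[OF i b] Let_def)
qed

lemma gamma_out: "\<not> a < sum_list ls \<Longrightarrow> gamma s ts ls a = a"
  by (simp add: gamma_def)

locale gsetup =
  fixes s :: "nat \<Rightarrow> nat" and ts :: "(nat \<Rightarrow> nat) list" and ls :: "nat list"
  assumes s: "s permutes {0..<length ls}"
    and lts: "length ts = length ls"
    and ts: "\<And>i. i < length ls \<Longrightarrow> ts ! i permutes {0..<ls ! i}"
begin

lemma G3:
  assumes Xs: "map length Xs = ls" and i: "i < length ls" and b: "b < ls ! i"
  shows "concat (act s (map2 act ts Xs)) ! (gamma s ts ls (offs ls i + b)) = concat Xs ! (offs ls i + b)"
proof -
  define Bs where "Bs = map2 act ts Xs"
  have lXs: "length Xs = length ls" using Xs by (metis length_map)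
  have lBs: "length Bs = length ls" using lXs lts by (simp add: Bs_def)
  have Bi: "Bs ! i = act (ts ! i) (Xs ! i)" using i lXs lts by (simp add: Bs_def)
  have lXi: "length (Xs ! i) = ls ! i" using Xs i lXs by (metis nth_map)
  have ml: "map length Bs = ls"
    by (rule nth_equalityI) (simp_all add: lBs Bs_def lXs lts, metis Xs nth_map lXs)
  have tsi: "ts ! i permutes {0..<length (Xs ! i)}" using ts[OF i] lXi by simp
  have tb: "(ts ! i) b < length (Bs ! i)" using perm_lt[OF tsi, of b] b lXi Bi by simp
  have sB: "s permutes {0..<length Bs}" using s lBs by simp
  have "concat (act s Bs) ! (spos s ls i + (ts ! i) b) = Bs ! i ! ((ts ! i) b)"
    using concat_act_nth[OF sB _ tb] i lBs ml by simp
  also have "\<dots> = Xs ! i ! b"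
    using Bi act_nth_perm[OF tsi, of b] b lXi by simp
  also have "\<dots> = concat Xs ! (offs ls i + b)"
    using concat_nth_offs[of i Xs b] Xs i b lXs lXi by simp
  finally show ?thesis using gamma_block[OF s i b] by (simp add: Bs_def)
qed

lemma gamma_lt:
  assumes i: "i < length ls" and b: "b < ls ! i"
  shows "gamma s ts ls (offs ls i + b) < sum_list ls"
proof -
  have si: "s i < length ls" using perm_lt[OF s i] .
  have "(ts ! i) b < ls ! i" using perm_lt[OF ts[OF i] b] .
  then have "spos s ls i + (ts ! i) b < offs (act s ls) (s i) + act s ls ! (s i)"
    unfolding spos_def using act_nth_perm[of s ls i] s i by simp
  also have "\<dots> \<le> sum_list (act s ls)"
    using offs_Suc[of "s i" "act s ls"] offs_le_sum[of "act s ls" "Suc (s i)"] si by simp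
  also have "\<dots> = sum_list ls" using act_sum_list[of s ls] s by simp
  finally show ?thesis using gamma_block[OF s i b] by simp
qed

lemma gamma_permutes: "gamma s ts ls permutes {0..<sum_list ls}"
proof (rule inj_imp_permutes)
  define Ys where "Ys = map (\<lambda>j. [offs ls j..<offs ls j + ls ! j]) [0..<length ls]"
  have Ys: "map length Ys = ls" by (intro nth_equalityI) (auto simp: Ys_def)
  have cY: "concat Ys = [0..<sum_list ls]" by (simp add: Ys_def upt_blocks)
  have key: "concat (act s (map2 act ts Ys)) ! (gamma s ts ls a) = a" if ha: "a < sum_list ls" for a
  proof -
    obtain i b where ib: "i < length ls" "b < ls ! i" "a = offs ls i + b"
      using block_decomp[OF ha] by blast
    then show ?thesis using G3[OF Ys ib(1,2)] cY ha by simp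
  qed
  show "inj_on (gamma s ts ls) {0..<sum_list ls}"
    by (rule inj_onI) (metis key atLeastLessThan_iff)
  show "gamma s ts ls a \<in> {0..<sum_list ls}" if ha: "a \<in> {0..<sum_list ls}" for a
  proof -
    have ha': "a < sum_list ls" using ha by simp
    obtain i b where ib: "i < length ls" "b < ls ! i" "a = offs ls i + b"
      using block_decomp[OF ha'] by blast
    then show ?thesis using gamma_lt by simp
  qed
  show "gamma s ts ls a = a" if "a \<notin> {0..<sum_list ls}" for a
    using that gamma_out by simp
qed simp

lemma ml_map2:
  assumes Xs: "map length Xs = ls"
  shows "map length (map2 act ts Xs) = ls"
proof -
  have lXs: "length Xs = length ls" using Xs by (metis length_map)
  show ?thesis
    by (rule nth_equalityI) (simp_all add: lXs lts, metis Xs nth_map lXs)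
qed

lemma GL:
  assumes Xs: "map length Xs = ls"
  shows "concat (act s (map2 act ts Xs)) = act (gamma s ts ls) (concat Xs)"
proof -
  define Bs where "Bs = map2 act ts Xs"
  have ml: "map length Bs = ls" unfolding Bs_def using ml_map2[OF Xs] .
  have sB: "s permutes {0..<length Bs}" using s ml by (metis length_map)
  have len1: "length (concat (act s Bs)) = sum_list ls"
  proof -
    have "length (concat (act s Bs)) = sum_list (map length (act s Bs))" by (simp add: length_concat)
    also have "\<dots> = sum_list (act s (map length Bs))" using act_map[OF sB, of length] by simp
    also have "\<dots> = sum_list ls" using act_sum_list[of s ls] s ml by simp
    finally show ?thesis .
  qed
  have len2: "length (concat Xs) = sum_list ls" using Xs by (simp add: length_concat)
  have gp: "gamma s ts ls permutes {0..<length (concat Xs)}" using gamma_permutes len2 by simp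
  show ?thesis unfolding Bs_def[symmetric]
  proof (rule nth_equalityI)
    show "length (concat (act s Bs)) = length (act (gamma s ts ls) (concat Xs))"
      using len1 len2 by simp
  next
    fix j assume j: "j < length (concat (act s Bs))"
    define a where "a = inv (gamma s ts ls) j"
    have jl: "j < length (concat Xs)" using j len1 len2 by simp
    have a: "a < sum_list ls" using perm_inv_lt[OF gp jl] len2 a_def by simp
    have ja: "j = gamma s ts ls a" using a_def permutes_inverses(1)[OF gp] by simp
    obtain i b where ib: "i < length ls" "b < ls ! i" "a = offs ls i + b"
      using block_decomp[OF a] by blast
    have "concat (act s Bs) ! j = concat Xs ! a"
      using G3[OF Xs ib(1,2)] ib(3) ja by (simp add: Bs_def)
    also have "\<dots> = act (gamma s ts ls) (concat Xs) ! j"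
      using jl a_def by simp
    finally show "concat (act s Bs) ! j = act (gamma s ts ls) (concat Xs) ! j" .
  qed
qed


lemma SPOS:
  assumes Ls: "map length Ls = ls" and i: "i < length ls" and b: "b < ls ! i"
  shows "spos (gamma s ts ls) (concat Ls) (offs ls i + b) = spos s (map sum_list Ls) i + spos (ts ! i) (Ls ! i) b"
proof -
  define Bs where "Bs = map2 act ts Ls"
  have lLs: "length Ls = length ls" using Ls by (metis length_map)
  have lBs: "length Bs = length ls" using lLs lts by (simp add: Bs_def)
  have mlB: "map length Bs = ls" unfolding Bs_def by (rule ml_map2[OF Ls])
  have sB: "s permutes {0..<length Bs}" using s lBs by simp
  have si: "s i < length Bs" using perm_lt[OF s i] lBs by simp
  have Bi: "Bs ! i = act (ts ! i) (Ls ! i)" using i lLs lts by (simp add: Bs_def)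
  have lLi: "length (Ls ! i) = ls ! i" using Ls i lLs by (metis nth_map)
  have tsi: "ts ! i permutes {0..<length (Ls ! i)}" using ts[OF i] lLi by simp
  have tb: "(ts ! i) b \<le> length (act s Bs ! s i)"
    using perm_lt[OF tsi, of b] b lLi act_nth_perm[OF sB, of i] i lBs Bi by simp
  have "spos (gamma s ts ls) (concat Ls) (offs ls i + b) = offs (concat (act s Bs)) (spos s ls i + (ts ! i) b)"
    unfolding spos_def using GL[OF Ls] gamma_block[OF s i b] by (simp add: Bs_def spos_def)
  also have "spos s ls i = offs (map length (act s Bs)) (s i)"
    unfolding spos_def using act_map[OF sB, of length] mlB by simp
  also have "offs (concat (act s Bs)) (offs (map length (act s Bs)) (s i) + (ts ! i) b) =
      sum_list (concat (take (s i) (act s Bs)) @ take ((ts ! i) b) (act s Bs ! s i))"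
    unfolding offs_def[of "concat _"] using take_concat_offs[of "s i" "act s Bs" "(ts ! i) b"] si tb by simp
  also have "\<dots> = offs (map sum_list (act s Bs)) (s i) + offs (act (ts ! i) (Ls ! i)) ((ts ! i) b)"
    using act_nth_perm[OF sB, of i] i lBs Bi by (simp add: offs_def sum_list_concat_map take_map)
  also have "map sum_list (act s Bs) = act s (map sum_list Ls)"
  proof -
    have "map sum_list Bs = map sum_list Ls"
    proof (rule nth_equalityI)
      fix k assume "k < length (map sum_list Bs)"
      then have k: "k < length ls" using lBs by simp
      have "ts ! k permutes {0..<length (Ls ! k)}" using ts[OF k] Ls k lLs by (metis nth_map)
      then show "map sum_list Bs ! k = map sum_list Ls ! k"
        using k lLs lts act_sum_list by (simp add: Bs_def)
    qed (simp add: lBs lLs)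
    then show ?thesis using act_map[OF sB, of sum_list] by simp
  qed
  finally show ?thesis by (simp add: spos_def)
qed

end

section \<open>Category\<close>

definition mf :: "(nat \<times> bool) list \<Rightarrow> nat multiset" where
  "mf xs = mset (map fst xs)"

definition fl :: "bool \<Rightarrow> (nat \<times> bool) list \<Rightarrow> (nat \<times> bool) list" where
  "fl e xs = (if e then flipfib xs else xs)"

lemma dhom_iff: "F \<in> dhom p q \<longleftrightarrow> length F = q \<and> mf (concat F) = mset [0..<p]"
proof -
  have "distinct xs \<and> set xs = {0..<p} \<longleftrightarrow> mset xs = mset [0..<p]" for xs :: "nat list"
    by (metis distinct_upt mset_eq_imp_distinct_iff mset_eq_setD set_eq_iff_mset_eq_distinct set_upt)
  then show ?thesis unfolding dhom_def mf_def mem_Collect_eq by blast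
qed

lemma mf_Nil[simp]: "mf [] = {#}" by (simp add: mf_def)
lemma mf_append[simp]: "mf (xs @ ys) = mf xs + mf ys" by (simp add: mf_def)
lemma mf_concat: "mf (concat xss) = sum_list (map mf xss)" by (induction xss) (auto simp: mf_def)
lemma mf_flipfib[simp]: "mf (flipfib xs) = mf xs"
  by (induction xs) (auto simp: mf_def flipfib_def)
lemma mf_fl[simp]: "mf (fl e xs) = mf xs" by (simp add: fl_def)

lemma flipfib_flipfib[simp]: "flipfib (flipfib xs) = xs"
  by (simp add: flipfib_def rev_map o_def case_prod_beta)

lemma flipfib_Nil[simp]: "flipfib [] = []" by (simp add: flipfib_def)

lemma flipfib_append[simp]: "flipfib (xs @ ys) = flipfib ys @ flipfib xs"
  by (simp add: flipfib_def)

lemma flipfib_Cons: "flipfib (x # xs) = flipfib xs @ [(fst x, \<not> snd x)]"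
  by (simp add: flipfib_def case_prod_beta)

lemma dcomp_alt: "dcomp G F = map (\<lambda>fib. concat (map (\<lambda>(j, e). fl e (F ! j)) fib)) G"
  by (simp add: dcomp_def fl_def)

lemma sum_list_map_mset: "sum_list (map g L) = sum_mset (image_mset g (mset L))"
  by (metis mset_map sum_mset_sum_list)

lemma mf_dcomp: "mf (concat (dcomp G F)) = sum_list (map (\<lambda>j. mf (F ! j)) (map fst (concat G)))"
proof -
  have "concat (dcomp G F) = concat (map (\<lambda>(j, e). fl e (F ! j)) (concat G))"
    by (induction G) (auto simp: dcomp_alt)
  moreover have "mf (concat (map (\<lambda>(j, e). fl e (F ! j)) L)) = sum_list (map (\<lambda>j. mf (F ! j)) (map fst L))" for L
    by (induction L) (auto simp: mf_concat)
  ultimately show ?thesis by simp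
qed

lemma dcomp_dhom:
  assumes F: "F \<in> dhom p q" and G: "G \<in> dhom q r"
  shows "dcomp G F \<in> dhom p r"
proof -
  have lF: "length F = q" and mF: "mf (concat F) = mset [0..<p]" using F by (auto simp: dhom_iff)
  have mG: "mset (map fst (concat G)) = mset [0..<q]" using G by (auto simp: dhom_iff mf_def)
  have "mf (concat (dcomp G F)) = sum_list (map (\<lambda>j. mf (F ! j)) [0..<q])"
    unfolding mf_dcomp sum_list_map_mset mG ..
  also have "map (\<lambda>j. mf (F ! j)) [0..<q] = map mf F"
    using lF by (intro nth_equalityI) auto
  then have "sum_list (map (\<lambda>j. mf (F ! j)) [0..<q]) = mf (concat F)"
    by (simp add: mf_concat)
  finally have "mf (concat (dcomp G F)) = mset [0..<p]" using mF by simp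
  moreover have "length (dcomp G F) = r" using G by (simp add: dhom_iff dcomp_def)
  ultimately show ?thesis unfolding dhom_iff by blast
qed

lemma dhom_fst_lt: "F \<in> dhom p q \<Longrightarrow> (x, e) \<in> set (concat F) \<Longrightarrow> x < p"
  by (force simp: dhom_def)


lemma dhom_fst_lt': "F \<in> dhom p q \<Longrightarrow> fib \<in> set F \<Longrightarrow> (x, e) \<in> set fib \<Longrightarrow> x < p"
  using dhom_fst_lt by fastforce

lemma did_dhom: "did p \<in> dhom p p"
proof -
  have "map fst (concat (map (\<lambda>i. [(i, False)]) xs)) = xs" for xs :: "nat list"
    by (induction xs) auto
  then show ?thesis by (simp add: dhom_iff did_def mf_def)
qed

lemma fl_concat_map:
  "fl e (concat (map (\<lambda>(j, e). fl e (F ! j)) ys)) = concat (map (\<lambda>(j, e). fl e (F ! j)) (fl e ys))"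
proof (cases e)
  case True
  have "flipfib (concat (map (\<lambda>(j, e). fl e (F ! j)) ys)) = concat (map (\<lambda>(j, e). fl e (F ! j)) (flipfib ys))"
    by (induction ys) (auto simp: flipfib_Cons fl_def)
  then show ?thesis using True by (simp add: fl_def)
qed (simp add: fl_def)

lemma dcomp_assoc_fib:
  assumes "\<forall>(k, e) \<in> set fib. k < length G"
  shows "concat (map (\<lambda>(j, e). fl e (map (\<lambda>fib. concat (map (\<lambda>(j, e). fl e (F ! j)) fib)) G ! j)) fib) =
        concat (map (\<lambda>(j, e). fl e (F ! j)) (concat (map (\<lambda>(j, e). fl e (G ! j)) fib)))"
  using assms
proof (induction fib)
  case (Cons a fib)
  obtain k e where a: "a = (k, e)" by force
  have "k < length G" using Cons.prems a by auto
  then show ?case using Cons by (auto simp: a fl_concat_map)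
qed simp

lemma dcomp_assoc:
  assumes "\<forall>(k, e) \<in> set (concat H). k < length G"
  shows "dcomp H (dcomp G F) = dcomp (dcomp H G) F"
  unfolding dcomp_alt map_map o_def
  by (rule map_cong[OF refl], rule dcomp_assoc_fib) (use assms in auto)

lemma dcomp_did_right:
  assumes "\<forall>fib \<in> set F. \<forall>(x, e) \<in> set fib. x < p"
  shows "dcomp F (did p) = F"
proof -
  have "concat (map (\<lambda>(j, e). fl e (did p ! j)) fib) = fib" if "\<forall>(x, e) \<in> set fib. x < p" for fib
    using that by (induction fib) (auto simp: did_def fl_def flipfib_def)
  then show ?thesis unfolding dcomp_alt using assms by (simp add: map_idI)
qed

lemma dcomp_did_left:
  "dcomp (did (length F)) F = F"
  by (rule nth_equalityI) (auto simp: dcomp_alt did_def fl_def)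

lemma HM_did: "HM bar (did (length ms)) ms = ms"
  by (rule nth_equalityI) (auto simp: HM_def did_def)

section \<open>The structure maps\<close>

definition shf :: "nat \<Rightarrow> (nat \<times> bool) list \<Rightarrow> (nat \<times> bool) list" where
  "shf n fib = map (\<lambda>(x, e). (x + n, e)) fib"

definition sh :: "nat \<Rightarrow> dmor \<Rightarrow> dmor" where
  "sh n F = map (shf n) F"

definition tO :: "(nat \<Rightarrow> nat) \<Rightarrow> 'x list list \<Rightarrow> 'x list" where
  "tO s xs = concat (act s xs)"

definition tA :: "(nat \<Rightarrow> nat) \<Rightarrow> (nat \<Rightarrow> nat) \<Rightarrow> (dmor \<times> 'x list) list \<Rightarrow> dmor \<times> 'x list" where
  "tA s s' fs = (concat (act s' (map (\<lambda>k. sh (spos s (map (length \<circ> snd) fs) k) (fst (fs ! k))) [0..<length fs])),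
                 concat (act s (map snd fs)))"

lemma mf_shf: "mf (shf n fib) = image_mset (\<lambda>x. x + n) (mf fib)"
  by (induction fib) (auto simp: shf_def mf_def)

lemma mf_sh: "mf (concat (sh n F)) = image_mset (\<lambda>x. x + n) (mf (concat F))"
  by (induction F) (auto simp: sh_def mf_shf)

lemma mset_shift: "image_mset (\<lambda>x. x + n) (mset [0..<p]) = mset [n..<n + p]"
  by (metis mset_map map_add_upt add.commute)

lemma mf_concat2: "mf (concat (concat X)) = sum_list (map (\<lambda>B. mf (concat B)) X)"
  by (induction X) auto

lemma act_upt_inv: "s permutes {0..<n} \<Longrightarrow> act s (map (\<lambda>k. g (s k)) [0..<n]) = map g [0..<n]"
  using act_upt[of s n "\<lambda>k. g (s k)"] by (simp add: permutes_inverses)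

lemma length_concat_act:
  "s permutes {0..<length xs} \<Longrightarrow> length (concat (act s xs)) = sum_list (map length xs)"
  by (simp add: length_concat act_map[symmetric] act_sum_list)

lemma tA_mf:
  assumes s: "s permutes {0..<length fs}" and s2: "s' permutes {0..<length fs}"
    and Ar: "\<And>k. k < length fs \<Longrightarrow> mf (concat (fst (fs ! k))) = mset [0..<length (snd (fs ! k))]"
  shows "mf (concat (fst (tA s s' fs))) = mset [0..<length (snd (tA s s' fs))]"
proof -
  define n where "n = length fs"
  define lens where "lens = map (length \<circ> snd) fs"
  define L where "L = act s lens"
  define Bs where "Bs = map (\<lambda>k. sh (spos s lens k) (fst (fs ! k))) [0..<n]"
  have s': "s permutes {0..<n}" using s n_def by simp
  have lL: "length L = n" by (simp add: L_def lens_def n_def)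
  have lB: "length Bs = n" by (simp add: Bs_def)
  have "mf (concat (fst (tA s s' fs))) = mf (concat (concat (act s' Bs)))"
    by (simp add: tA_def Bs_def lens_def n_def)
  also have "\<dots> = sum_list (map (\<lambda>B. mf (concat B)) (act s' Bs))" by (rule mf_concat2)
  also have "\<dots> = sum_list (map (\<lambda>B. mf (concat B)) Bs)"
    using act_map[of s' Bs "\<lambda>B. mf (concat B)"] act_sum_list[of s' "map (\<lambda>B. mf (concat B)) Bs"] s2 lB n_def
    by simp
  also have "\<dots> = sum_list (map (\<lambda>k. mset [spos s lens k..<spos s lens k + lens ! k]) [0..<n])"
  proof -
    have "mf (concat (sh (spos s lens k) (fst (fs ! k)))) = mset [spos s lens k..<spos s lens k + lens ! k]"
      if "k < n" for k
      using that Ar[of k] mset_shift by (simp add: mf_sh n_def lens_def del: mset_upt)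
    then show ?thesis unfolding Bs_def map_map o_def
      by (intro arg_cong[where f=sum_list] map_cong) auto
  qed
  also have "\<dots> = sum_list (map (\<lambda>j. mset [offs L j..<offs L j + L ! j]) [0..<n])"
  proof -
    have e1: "map (\<lambda>k. mset [offs L (s k)..<offs L (s k) + L ! (s k)]) [0..<n] =
          map (\<lambda>k. mset [spos s lens k..<spos s lens k + lens ! k]) [0..<n]"
    proof (rule map_cong[OF refl])
      fix k assume "k \<in> set [0..<n]"
      then have k: "k < n" by simp
      have "L ! (s k) = lens ! k" unfolding L_def using act_nth_perm[of s lens k] s' k by (simp add: lens_def n_def)
      then show "mset [offs L (s k)..<offs L (s k) + L ! (s k)] = mset [spos s lens k..<spos s lens k + lens ! k]"
        by (simp add: spos_def L_def del: mset_upt)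
    qed
    have "map (\<lambda>j. mset [offs L j..<offs L j + L ! j]) [0..<n] =
          act s (map (\<lambda>k. mset [spos s lens k..<spos s lens k + lens ! k]) [0..<n])"
    proof -
      have "act s (map (\<lambda>k. mset [offs L (s k)..<offs L (s k) + L ! (s k)]) [0..<n]) =
            map (\<lambda>j. mset [offs L j..<offs L j + L ! j]) [0..<n]"
        by (rule act_upt_inv[OF s'])
      then show ?thesis unfolding e1 by (rule sym)
    qed
    then show ?thesis using act_sum_list[of s "map (\<lambda>k. mset [spos s lens k..<spos s lens k + lens ! k]) [0..<n]"] s' by simp
  qed
  also have "\<dots> = mset [0..<sum_list L]"
    by (simp add: upt_blocks[of L] mset_concat lL o_def)
  also have "sum_list L = length (snd (tA s s' fs))"
    using s by (simp add: L_def act_sum_list lens_def tA_def length_concat_act o_def)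
  finally show ?thesis .
qed

lemma sh_did: "sh n (did l) = map (\<lambda>i. [(i, False)]) [n..<n + l]"
proof -
  have "sh n (did l) = map (\<lambda>i. [(i, False)]) (map (\<lambda>i. i + n) [0..<l])"
    by (simp add: sh_def did_def shf_def)
  then show ?thesis by (simp add: map_add_upt add.commute)
qed

lemma blocks_act:
  assumes s: "s permutes {0..<length lens}"
  shows "concat (act s (map (\<lambda>k. [spos s lens k..<spos s lens k + lens ! k]) [0..<length lens])) = [0..<sum_list lens]"
proof -
  define L where "L = act s lens"
  have "act s (map (\<lambda>k. [spos s lens k..<spos s lens k + lens ! k]) [0..<length lens]) =
        map (\<lambda>j. [offs L j..<offs L j + L ! j]) [0..<length L]"
  proof -
    have "act s (map (\<lambda>k. [spos s lens k..<spos s lens k + lens ! k]) [0..<length lens]) =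
          map (\<lambda>j. [spos s lens (inv s j)..<spos s lens (inv s j) + lens ! (inv s j)]) [0..<length lens]"
      by (rule act_upt[OF s])
    also have "\<dots> = map (\<lambda>j. [offs L j..<offs L j + L ! j]) [0..<length L]"
      by (rule map_cong) (auto simp: L_def spos_def permutes_inverses[OF s])
    finally show ?thesis .
  qed
  moreover have "sum_list L = sum_list lens" using act_sum_list[of s lens] s by (simp add: L_def)
  moreover have "concat (map (\<lambda>j. [offs L j..<offs L j + L ! j]) [0..<length L]) = [0..<sum_list L]"
    by (rule upt_blocks[symmetric])
  ultimately show ?thesis by (simp only:)
qed

lemma tA_id:
  assumes s: "s permutes {0..<length xs}"
  shows "tA s s (map (\<lambda>ms. (did (length ms), ms)) xs) = (did (length (concat (act s xs))), concat (act s xs))"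
proof -
  define lens where "lens = map length xs"
  define phi where "phi = (\<lambda>i::nat. [(i, False)])"
  have sl: "s permutes {0..<length lens}" using s by (simp add: lens_def)
  have ml: "map (length \<circ> snd) (map (\<lambda>ms. (did (length ms), ms)) xs) = lens"
    by (simp add: lens_def o_def)
  have "map (\<lambda>k. sh (spos s lens k) (fst (map (\<lambda>ms. (did (length ms), ms)) xs ! k))) [0..<length xs]
      = map (map phi) (map (\<lambda>k. [spos s lens k..<spos s lens k + lens ! k]) [0..<length lens])"
    by (rule nth_equalityI) (auto simp: sh_did lens_def phi_def)
  then have "fst (tA s s (map (\<lambda>ms. (did (length ms), ms)) xs)) =
      concat (act s (map (map phi) (map (\<lambda>k. [spos s lens k..<spos s lens k + lens ! k]) [0..<length lens])))"
    unfolding tA_def ml by simp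
  also have "\<dots> = map phi (concat (act s (map (\<lambda>k. [spos s lens k..<spos s lens k + lens ! k]) [0..<length lens])))"
    using act_map[of s "map (\<lambda>k. [spos s lens k..<spos s lens k + lens ! k]) [0..<length lens]" "map phi"] sl
    by (simp add: map_concat)
  also have "\<dots> = map phi [0..<sum_list lens]" using blocks_act[OF sl] by simp
  also have "\<dots> = did (length (concat (act s xs)))"
    using length_concat_act[OF s] by (simp add: did_def phi_def lens_def)
  finally show ?thesis by (simp add: tA_def o_def)
qed

lemma tO_unit: "tO id [x] = x" by (simp add: tO_def)

lemma shf_0: "shf 0 fib = fib"
  by (induction fib) (auto simp: shf_def)

lemma tA_unit: "tA id id [f] = f"
proof -
  have "map (shf 0) F = F" for F by (induction F) (auto simp: shf_0)
  then show ?thesis by (simp add: tA_def spos_def offs_def sh_def)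
qed

lemma tO_equiv:
  "s permutes {0..<length xs} \<Longrightarrow> r permutes {0..<length xs} \<Longrightarrow> tO (s \<circ> r) xs = tO s (act r xs)"
  by (simp add: tO_def act_comp)

lemma tA_equiv:
  assumes s: "s permutes {0..<length fs}" and s2: "s' permutes {0..<length fs}" and r: "r permutes {0..<length fs}"
  shows "tA (s \<circ> r) (s' \<circ> r) fs = tA s s' (act r fs)"
proof -
  define n where "n = length fs"
  define lens where "lens = map (length \<circ> snd) fs"
  define h where "h = (\<lambda>k. sh (spos (s \<circ> r) lens k) (fst (fs ! k)))"
  have r': "r permutes {0..<n}" using r n_def by simp
  have lr: "map (length \<circ> snd) (act r fs) = act r lens"
    using act_map[OF r, of "length \<circ> snd"] by (simp add: lens_def)
  have 1: "act (s' \<circ> r) (map h [0..<n]) = act s' (act r (map h [0..<n]))"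
    using act_comp[of s' "map h [0..<n]" r] s2 r by (simp add: n_def)
  have 2: "act r (map h [0..<n]) = map (\<lambda>k. h (inv r k)) [0..<n]" by (rule act_upt[OF r'])
  have 3: "map (\<lambda>k. h (inv r k)) [0..<n] =
      map (\<lambda>k. sh (spos s (act r lens) k) (fst (act r fs ! k))) [0..<n]"
  proof (rule map_cong[OF refl])
    fix k assume "k \<in> set [0..<n]"
    then have k: "k < n" by simp
    have "spos (s \<circ> r) lens (inv r k) = spos s (act r lens) k"
      unfolding spos_def using act_comp[of s lens r] s r permutes_inverses(1)[OF r]
      by (simp add: lens_def)
    then show "h (inv r k) = sh (spos s (act r lens) k) (fst (act r fs ! k))"
      using k by (simp add: h_def n_def)
  qed
  have 4: "act (s \<circ> r) (map snd fs) = act s (map snd (act r fs))"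
    using act_comp[of s "map snd fs" r] s r act_map[OF r, of snd] by simp
  have "fst (tA (s \<circ> r) (s' \<circ> r) fs) = concat (act (s' \<circ> r) (map h [0..<n]))"
    by (simp add: tA_def h_def lens_def n_def)
  also have "\<dots> = concat (act s' (map (\<lambda>k. sh (spos s (act r lens) k) (fst (act r fs ! k))) [0..<n]))"
    unfolding 1 2 3 ..
  also have "\<dots> = fst (tA s s' (act r fs))"
    unfolding tA_def lr by (simp add: n_def)
  finally show ?thesis using 4 by (simp add: tA_def prod_eq_iff)
qed

lemma fl_shf: "fl e (shf a xs) = shf a (fl e xs)"
  by (simp add: fl_def flipfib_def shf_def rev_map case_prod_beta)

lemma shf_append[simp]: "shf a (xs @ ys) = shf a xs @ shf a ys" by (simp add: shf_def)
lemma shf_Nil[simp]: "shf a [] = []" by (simp add: shf_def)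

lemma shf_Cons: "shf t ((j, e) # xs) = (t + j, e) # shf t xs" by (simp add: shf_def add.commute)

lemma dcomp_concat: "dcomp (concat Xs) F = concat (map (\<lambda>X. dcomp X F) Xs)"
  by (simp add: dcomp_def map_concat)

lemma dcomp_sh:
  assumes "\<forall>fib\<in>set G. \<forall>(j, e)\<in>set fib. FF ! (t + j) = shf a (Fk ! j)"
  shows "dcomp (sh t G) FF = sh a (dcomp G Fk)"
proof -
  have "concat (map (\<lambda>(j, e). fl e (FF ! j)) (shf t fib)) = shf a (concat (map (\<lambda>(j, e). fl e (Fk ! j)) fib))"
    if "\<forall>(j, e)\<in>set fib. FF ! (t + j) = shf a (Fk ! j)" for fib
    using that by (induction fib) (auto simp: shf_Cons fl_shf)
  then show ?thesis using assms unfolding dcomp_alt sh_def by simp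
qed

lemma concat_act_concat:
  assumes "s permutes {0..<length X}"
  shows "concat (act s (map concat X)) = concat (concat (act s X))"
proof -
  have "concat (map concat Y) = concat (concat Y)" for Y :: "'a list list list" by (induction Y) auto
  then show ?thesis using act_map[OF assms, of concat] by simp
qed

lemma tO_assoc:
  assumes s: "s permutes {0..<length xss}" and lts: "length ts = length xss"
    and ts: "\<And>i. i < length xss \<Longrightarrow> ts ! i permutes {0..<length (xss ! i)}"
  shows "tO s (map2 tO ts xss) = tO (gamma s ts (map length xss)) (concat xss)"
proof -
  interpret gsetup s ts "map length xss"
    by unfold_locales (use s lts ts in auto)
  have m: "map2 tO ts xss = map concat (map2 act ts xss)" by (simp add: tO_def case_prod_beta)
  have "tO s (map2 tO ts xss) = concat (act s (map concat (map2 act ts xss)))"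
    unfolding tO_def[of s] m ..
  also have "\<dots> = concat (concat (act s (map2 act ts xss)))"
    by (rule concat_act_concat) (use s lts in simp)
  also have "\<dots> = tO (gamma s ts (map length xss)) (concat xss)"
    using GL[of xss] by (simp add: tO_def)
  finally show ?thesis .
qed

lemma sh_sh: "sh a (sh b F) = sh (b + a) F"
  by (simp add: sh_def shf_def case_prod_beta add.assoc)

lemma sh_concat_act:
  assumes "t permutes {0..<length Z}"
  shows "sh a (concat (act t Z)) = concat (act t (map (sh a) Z))"
proof -
  have sf: "sh a = map (shf a)" by (rule ext) (simp add: sh_def)
  show ?thesis using act_map[OF assms, of "sh a"] unfolding sf by (simp add: map_concat)
qed

lemma tA_assoc:
  assumes s: "s permutes {0..<length fss}" and s2: "s' permutes {0..<length fss}"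
    and lts: "length ts = length fss" and lts2: "length ts' = length fss"
    and ts: "\<And>i. i < length fss \<Longrightarrow> ts ! i permutes {0..<length (fss ! i)}"
    and ts2: "\<And>i. i < length fss \<Longrightarrow> ts' ! i permutes {0..<length (fss ! i)}"
  shows "tA s s' (map (\<lambda>i. tA (ts ! i) (ts' ! i) (fss ! i)) [0..<length fss]) =
         tA (gamma s ts (map length fss)) (gamma s' ts' (map length fss)) (concat fss)"
proof -
  define n where "n = length fss"
  define ls where "ls = map length fss"
  define lenss where "lenss = map (map (length \<circ> snd)) fss"
  define SL where "SL = map sum_list lenss"
  define g where "g = gamma s ts ls"
  define g' where "g' = gamma s' ts' ls"
  have lls: "length ls = n" by (simp add: ls_def n_def)
  interpret G1: gsetup s ts ls
    by unfold_locales (use s lts ts in \<open>auto simp: ls_def\<close>)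
  interpret G2: gsetup s' ts' ls
    by unfold_locales (use s2 lts2 ts2 in \<open>auto simp: ls_def\<close>)
  define As where "As = map (\<lambda>i. tA (ts ! i) (ts' ! i) (fss ! i)) [0..<n]"
  have lAs: "length As = n" by (simp add: As_def)
  have SLeq: "map (length \<circ> snd) As = SL"
  proof (rule nth_equalityI)
    show "length (map (length \<circ> snd) As) = length SL" by (simp add: lAs SL_def lenss_def n_def)
    fix i assume "i < length (map (length \<circ> snd) As)"
    then have i: "i < n" by (simp add: lAs)
    have tsi: "ts ! i permutes {0..<length (map snd (fss ! i))}" using ts i n_def by simp
    have "length (snd (As ! i)) = sum_list (map length (map snd (fss ! i)))"
      using length_concat_act[OF tsi] i by (simp add: As_def tA_def)
    then show "map (length \<circ> snd) As ! i = SL ! i"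
      using i lAs by (simp add: SL_def lenss_def n_def o_def)
  qed
  define Z where "Z i = map (\<lambda>b. sh (spos (ts ! i) (lenss ! i) b + spos s SL i) (fst (fss ! i ! b))) [0..<ls ! i]" for i
  have lZ: "length (Z i) = ls ! i" for i by (simp add: Z_def)
  have fstA: "sh (spos s SL i) (fst (As ! i)) = concat (act (ts' ! i) (Z i))" if i: "i < n" for i
  proof -
    have li: "lenss ! i = map (length \<circ> snd) (fss ! i)" using i by (simp add: lenss_def n_def)
    have lsi: "ls ! i = length (fss ! i)" using i by (simp add: ls_def n_def)
    define W where "W = map (\<lambda>b. sh (spos (ts ! i) (lenss ! i) b) (fst (fss ! i ! b))) [0..<length (fss ! i)]"
    have "fst (As ! i) = concat (act (ts' ! i) W)"
      using i by (simp add: As_def tA_def W_def li)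
    moreover have "ts' ! i permutes {0..<length W}" using ts2 i n_def by (simp add: W_def)
    moreover have "map (sh (spos s SL i)) W = Z i"
      by (simp add: W_def Z_def lsi sh_sh)
    ultimately show ?thesis using sh_concat_act by metis
  qed
  have Zlen: "map length (map Z [0..<n]) = ls"
    by (rule nth_equalityI) (simp_all add: lls lZ)
  have "fst (tA s s' As) = concat (act s' (map (\<lambda>i. concat (act (ts' ! i) (Z i))) [0..<n]))"
  proof -
    have e: "map (\<lambda>k. sh (spos s SL k) (fst (As ! k))) [0..<n] = map (\<lambda>i. concat (act (ts' ! i) (Z i))) [0..<n]"
      by (rule map_cong) (auto simp: fstA)
    show ?thesis unfolding tA_def SLeq lAs fst_conv e ..
  qed
  also have "map (\<lambda>i. concat (act (ts' ! i) (Z i))) [0..<n] = map concat (map2 act ts' (map Z [0..<n]))"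
    by (rule nth_equalityI) (simp_all add: lts2 n_def)
  also have "concat (act s' (map concat (map2 act ts' (map Z [0..<n])))) =
      concat (concat (act s' (map2 act ts' (map Z [0..<n]))))"
    by (rule concat_act_concat) (use s2 lts2 n_def in simp)
  also have "\<dots> = concat (act g' (concat (map Z [0..<n])))"
    using G2.GL[OF Zlen] by (simp add: g'_def)
  also have "concat (map Z [0..<n]) = map (\<lambda>c. sh (spos g (map (length \<circ> snd) (concat fss)) c) (fst (concat fss ! c))) [0..<length (concat fss)]"
  proof (rule nth_equalityI)
    show "length (concat (map Z [0..<n])) = length (map (\<lambda>c. sh (spos g (map (length \<circ> snd) (concat fss)) c) (fst (concat fss ! c))) [0..<length (concat fss)])"
      using Zlen by (simp add: length_concat ls_def)
    fix c assume "c < length (concat (map Z [0..<n]))"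
    then have c: "c < sum_list ls" using Zlen by (simp add: length_concat)
    obtain i b where ib: "i < length ls" "b < ls ! i" "c = offs ls i + b"
      using block_decomp[OF c] by blast
    have cl: "c < length (concat fss)" using c by (simp add: ls_def length_concat)
    have "concat (map Z [0..<n]) ! c = Z i ! b"
      using concat_nth_offs[of i "map Z [0..<n]" b] Zlen ib lls lZ by simp
    also have "\<dots> = sh (spos (ts ! i) (lenss ! i) b + spos s SL i) (fst (fss ! i ! b))"
      using ib by (simp add: Z_def)
    also have "fss ! i ! b = concat fss ! c"
      using concat_nth_offs[of i fss b] ib by (simp add: ls_def)
    also have "spos (ts ! i) (lenss ! i) b + spos s SL i = spos g (map (length \<circ> snd) (concat fss)) c"
    proof -
      have ml: "map length lenss = ls" by (simp add: lenss_def ls_def o_def)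
      have "map (length \<circ> snd) (concat fss) = concat lenss" by (simp add: lenss_def map_concat)
      then show ?thesis using G1.SPOS[OF ml ib(1,2)] ib(3) by (simp add: g_def SL_def)
    qed
    finally show "concat (map Z [0..<n]) ! c = map (\<lambda>c. sh (spos g (map (length \<circ> snd) (concat fss)) c) (fst (concat fss ! c))) [0..<length (concat fss)] ! c"
      using cl by simp
  qed
  also have "concat (act g' (map (\<lambda>c. sh (spos g (map (length \<circ> snd) (concat fss)) c) (fst (concat fss ! c))) [0..<length (concat fss)]))
      = fst (tA g g' (concat fss))" by (simp add: tA_def)
  finally have 1: "fst (tA s s' As) = fst (tA g g' (concat fss))" .
  have "map snd As = map2 tO ts (map (map snd) fss)"
    by (rule nth_equalityI) (simp_all add: lAs lts n_def As_def tA_def tO_def)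
  then have "snd (tA s s' As) = tO s (map2 tO ts (map (map snd) fss))" by (simp add: tA_def tO_def)
  also have "\<dots> = tO (gamma s ts (map length (map (map snd) fss))) (concat (map (map snd) fss))"
    by (rule tO_assoc) (use s lts ts in auto)
  also have "\<dots> = snd (tA g g' (concat fss))"
    by (simp add: tA_def tO_def g_def ls_def map_concat o_def)
  finally have 2: "snd (tA s s' As) = snd (tA g g' (concat fss))" .
  show ?thesis using 1 2 by (simp add: prod_eq_iff As_def n_def g_def g'_def ls_def)
qed

context
  fixes bar :: "'m::monoid_mult \<Rightarrow> 'm"
  assumes inv: "involution bar"
begin

lemma bar_bar[simp]: "bar (bar m) = m" and bar_mult: "bar (m * n) = bar n * bar m" and bar_one[simp]: "bar 1 = 1"
  using inv by (auto simp: involution_def)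

definition psi :: "'m list \<Rightarrow> nat \<times> bool \<Rightarrow> 'm" where
  "psi ms = (\<lambda>(x, e). if e then bar (ms ! x) else ms ! x)"

lemma psi_simp[simp]: "psi ms (x, e) = (if e then bar (ms ! x) else ms ! x)"
  by (simp add: psi_def)

lemma prod_flipfib: "prod_list (map (psi ms) (flipfib xs)) = bar (prod_list (map (psi ms) xs))"
  by (induction xs) (auto simp: flipfib_Cons bar_mult)

lemma prod_fl: "prod_list (map (psi ms) (fl e xs)) = (if e then bar (prod_list (map (psi ms) xs)) else prod_list (map (psi ms) xs))"
  by (simp add: fl_def prod_flipfib)

lemma HM_alt: "HM bar F ms = map (\<lambda>fib. prod_list (map (psi ms) fib)) F"
  by (simp add: HM_def psi_def)

lemma HM_dcomp:
  assumes "\<forall>(k, e) \<in> set (concat G). k < length F"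
  shows "HM bar (dcomp G F) ms = HM bar G (HM bar F ms)"
  unfolding HM_alt dcomp_alt
proof (rule nth_equalityI)
  fix i assume i: "i < length (map (\<lambda>fib. prod_list (map (psi ms) fib)) (map (\<lambda>fib. concat (map (\<lambda>(j, e). fl e (F ! j)) fib)) G))"
  have "prod_list (map (psi ms) (concat (map (\<lambda>(j, e). fl e (F ! j)) fib))) =
        prod_list (map (psi (map (\<lambda>fib. prod_list (map (psi ms) fib)) F)) fib)"
    if "\<forall>(k, e) \<in> set fib. k < length F" for fib
    using that by (induction fib) (auto simp: prod_fl)
  then show "map (\<lambda>fib. prod_list (map (psi ms) fib)) (map (\<lambda>fib. concat (map (\<lambda>(j, e). fl e (F ! j)) fib)) G) ! i =
    map (\<lambda>fib. prod_list (map (psi (map (\<lambda>fib. prod_list (map (psi ms) fib)) F)) fib)) G ! i"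
    using i assms by (auto simp: set_concat dest!: nth_mem)
qed simp

lemma Ar_iff: "(F, ms) \<in> Ar (tuple_cat bar) \<longleftrightarrow> F \<in> dhom (length ms) (length F)"
  by (auto simp: tuple_cat_def dhom_def)


lemma HM_concat: "HM bar (concat Xs) ms = concat (map (\<lambda>X. HM bar X ms) Xs)"
  by (simp add: HM_def map_concat)

lemma HM_sh:
  assumes "\<forall>fib\<in>set F. \<forall>(x, e)\<in>set fib. x < length m"
    and "\<And>x. x < length m \<Longrightarrow> src ! (spos0 + x) = m ! x"
  shows "HM bar (sh spos0 F) src = HM bar F m"
proof -
  have "map (psi src) (shf spos0 fib) = map (psi m) fib" if "\<forall>(x, e)\<in>set fib. x < length m" for fib
    using that assms(2) by (induction fib) (auto simp: shf_def add.commute)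
  then show ?thesis using assms(1) unfolding HM_alt sh_def by simp
qed

lemma tA_Cod:
  assumes s: "s permutes {0..<length fs}" and s2: "s' permutes {0..<length fs}"
    and fib: "\<And>k. k < length fs \<Longrightarrow> \<forall>fib\<in>set (fst (fs ! k)). \<forall>(x, e)\<in>set fib. x < length (snd (fs ! k))"
  shows "HM bar (fst (tA s s' fs)) (snd (tA s s' fs)) = tO s' (map (\<lambda>(F, ms). HM bar F ms) fs)"
proof -
  define n where "n = length fs"
  define lens where "lens = map (length \<circ> snd) fs"
  define src where "src = concat (act s (map snd fs))"
  define Bs where "Bs = map (\<lambda>k. sh (spos s lens k) (fst (fs ! k))) [0..<n]"
  have lB: "length Bs = n" by (simp add: Bs_def)
  have s2': "s' permutes {0..<length Bs}" using s2 lB n_def by simp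
  have srcnth: "src ! (spos s lens k + x) = snd (fs ! k) ! x" if "k < n" "x < length (snd (fs ! k))" for k x
    using concat_act_nth[of s "map snd fs" k x] s that by (simp add: src_def lens_def n_def o_def)
  have "HM bar (fst (tA s s' fs)) (snd (tA s s' fs)) = HM bar (concat (act s' Bs)) src"
    by (simp add: tA_def Bs_def lens_def n_def src_def)
  also have "\<dots> = concat (act s' (map (\<lambda>X. HM bar X src) Bs))"
    unfolding HM_concat using act_map[OF s2', of "\<lambda>X. HM bar X src"] by simp
  also have "map (\<lambda>X. HM bar X src) Bs = map (\<lambda>(F, ms). HM bar F ms) fs"
  proof (rule nth_equalityI)
    fix k assume "k < length (map (\<lambda>X. HM bar X src) Bs)"
    then have k: "k < n" by (simp add: lB)
    have "HM bar (sh (spos s lens k) (fst (fs ! k))) src = HM bar (fst (fs ! k)) (snd (fs ! k))"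
      by (rule HM_sh[OF fib]) (use k srcnth n_def in auto)
    then show "map (\<lambda>X. HM bar X src) Bs ! k = map (\<lambda>(F, ms). HM bar F ms) fs ! k"
      using k by (simp add: Bs_def n_def case_prod_beta)
  qed (simp add: lB n_def)
  finally show ?thesis by (simp add: tO_def)
qed


lemma Comp_eq: "Comp (tuple_cat bar) X Y = (dcomp (fst X) (fst Y), snd Y)"
  by (simp add: tuple_cat_def case_prod_beta)

lemma tA_comp:
  assumes s: "s permutes {0..<length fs}" and s1: "s1 permutes {0..<length fs}" and s2: "s2 permutes {0..<length fs}"
    and lg: "length gs = length fs"
    and gfib: "\<And>k. k < length fs \<Longrightarrow> \<forall>fib\<in>set (fst (gs ! k)). \<forall>(x, e)\<in>set fib. x < length (snd (gs ! k))"
    and dc: "map snd gs = map (\<lambda>(F, ms). HM bar F ms) fs"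
  shows "Comp (tuple_cat bar) (tA s1 s2 gs) (tA s s1 fs) = tA s s2 (map2 (Comp (tuple_cat bar)) gs fs)"
proof -
  define n where "n = length fs"
  define lensF where "lensF = map (length \<circ> snd) fs"
  define lensG where "lensG = map (length \<circ> snd) gs"
  define BF where "BF = map (\<lambda>k. sh (spos s lensF k) (fst (fs ! k))) [0..<n]"
  define BG where "BG = map (\<lambda>k. sh (spos s1 lensG k) (fst (gs ! k))) [0..<n]"
  define FF where "FF = concat (act s1 BF)"
  have lBF: "length BF = n" and lBG: "length BG = n" by (simp_all add: BF_def BG_def)
  have sndg: "snd (gs ! k) = HM bar (fst (fs ! k)) (snd (fs ! k))" if "k < n" for k
    using arg_cong[OF dc, of "\<lambda>l. l ! k"] that lg by (simp add: n_def case_prod_beta)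
  have lGk: "lensG ! k = length (fst (fs ! k))" if "k < n" for k
    using sndg[OF that] that lg by (simp add: lensG_def n_def HM_def)
  have mlBF: "map length BF = lensG"
  proof (rule nth_equalityI)
    show "length (map length BF) = length lensG" by (simp add: lBF lensG_def lg n_def)
    fix k assume "k < length (map length BF)"
    then have k: "k < n" by (simp add: lBF)
    then show "map length BF ! k = lensG ! k" using lGk[OF k] by (simp add: BF_def sh_def)
  qed
  have s1B: "s1 permutes {0..<length BF}" using s1 lBF n_def by simp
  have FFnth: "FF ! (spos s1 lensG k + j) = shf (spos s lensF k) (fst (fs ! k) ! j)"
    if k: "k < n" and j: "j < lensG ! k" for k j
  proof -
    have "FF ! (spos s1 (map length BF) k + j) = BF ! k ! j"
      unfolding FF_def by (rule concat_act_nth[OF s1B]) (use k j mlBF lBF in auto)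
    then have "FF ! (spos s1 lensG k + j) = BF ! k ! j" unfolding mlBF .
    then show ?thesis using k j lGk[OF k] by (simp add: BF_def sh_def)
  qed
  have "fst (Comp (tuple_cat bar) (tA s1 s2 gs) (tA s s1 fs)) = dcomp (concat (act s2 BG)) FF"
    by (simp add: Comp_eq tA_def BG_def FF_def BF_def lensF_def lensG_def n_def lg)
  also have "\<dots> = concat (act s2 (map (\<lambda>X. dcomp X FF) BG))"
    unfolding dcomp_concat using act_map[of s2 BG "\<lambda>X. dcomp X FF"] s2 lBG n_def by simp
  also have "map (\<lambda>X. dcomp X FF) BG = map (\<lambda>k. sh (spos s lensF k) (dcomp (fst (gs ! k)) (fst (fs ! k)))) [0..<n]"
  proof (rule nth_equalityI)
    fix k assume "k < length (map (\<lambda>X. dcomp X FF) BG)"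
    then have k: "k < n" by (simp add: lBG)
    have "dcomp (sh (spos s1 lensG k) (fst (gs ! k))) FF = sh (spos s lensF k) (dcomp (fst (gs ! k)) (fst (fs ! k)))"
      by (rule dcomp_sh) (use gfib[of k] k FFnth[OF k] lg in \<open>fastforce simp: n_def lensG_def\<close>)
    then show "map (\<lambda>X. dcomp X FF) BG ! k = map (\<lambda>k. sh (spos s lensF k) (dcomp (fst (gs ! k)) (fst (fs ! k)))) [0..<n] ! k"
      using k by (simp add: BG_def)
  qed (simp add: lBG)
  also have "concat (act s2 (map (\<lambda>k. sh (spos s lensF k) (dcomp (fst (gs ! k)) (fst (fs ! k)))) [0..<n]))
      = fst (tA s s2 (map2 (Comp (tuple_cat bar)) gs fs))"
  proof -
    have A: "map (length \<circ> snd) (map2 (Comp (tuple_cat bar)) gs fs) = lensF"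
      by (rule nth_equalityI) (auto simp: lensF_def lg Comp_eq)
    have L: "length (map2 (Comp (tuple_cat bar)) gs fs) = n" by (simp add: lg n_def)
    have B: "map (\<lambda>k. sh (spos s lensF k) (fst (map2 (Comp (tuple_cat bar)) gs fs ! k))) [0..<n] =
      map (\<lambda>k. sh (spos s lensF k) (dcomp (fst (gs ! k)) (fst (fs ! k)))) [0..<n]"
      by (rule map_cong) (auto simp: lg Comp_eq n_def)
    show ?thesis unfolding tA_def fst_conv A L B by (rule refl)
  qed
  finally have 1: "fst (Comp (tuple_cat bar) (tA s1 s2 gs) (tA s s1 fs)) = fst (tA s s2 (map2 (Comp (tuple_cat bar)) gs fs))" .
  have "map snd (map2 (Comp (tuple_cat bar)) gs fs) = map snd fs"
    by (rule nth_equalityI) (auto simp: lg Comp_eq)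
  then have 2: "snd (Comp (tuple_cat bar) (tA s1 s2 gs) (tA s s1 fs)) = snd (tA s s2 (map2 (Comp (tuple_cat bar)) gs fs))"
    by (simp add: Comp_eq tA_def)
  show ?thesis using 1 2 by (simp add: prod_eq_iff)
qed

lemma category_tuple: "category (tuple_cat bar)"
  unfolding category_def
proof (intro conjI ballI impI)
  show "Id (tuple_cat bar) x \<in> Ar (tuple_cat bar)" for x
    using did_dhom by (auto simp: tuple_cat_def did_def)
  show "Dom (tuple_cat bar) (Id (tuple_cat bar) x) = x" for x by (simp add: tuple_cat_def)
  show "Cod (tuple_cat bar) (Id (tuple_cat bar) x) = x" for x by (simp add: tuple_cat_def HM_did)
  show "Dom (tuple_cat bar) f \<in> Ob (tuple_cat bar)" for f by (simp add: tuple_cat_def)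
  show "Cod (tuple_cat bar) f \<in> Ob (tuple_cat bar)" for f by (simp add: tuple_cat_def)
next
  fix f g assume f: "f \<in> Ar (tuple_cat bar)" and g: "g \<in> Ar (tuple_cat bar)"
    and fg: "Cod (tuple_cat bar) f = Dom (tuple_cat bar) g"
  obtain F ms where f': "f = (F, ms)" by force
  obtain G ns where g': "g = (G, ns)" by force
  have F: "F \<in> dhom (length ms) (length F)" using f f' Ar_iff by simp
  have G: "G \<in> dhom (length ns) (length G)" using g g' Ar_iff by simp
  have ns: "ns = HM bar F ms" using fg f' g' by (simp add: tuple_cat_def)
  have lns: "length ns = length F" by (simp add: ns HM_def)
  have GF: "dcomp G F \<in> dhom (length ms) (length G)" using dcomp_dhom[OF F] G lns by simp
  have kl: "\<forall>(k, e) \<in> set (concat G). k < length F"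
    using G lns by (auto dest: dhom_fst_lt dhom_fst_lt')
  show "Comp (tuple_cat bar) g f \<in> Ar (tuple_cat bar)"
    using GF by (auto simp: tuple_cat_def f' g')
  show "Dom (tuple_cat bar) (Comp (tuple_cat bar) g f) = Dom (tuple_cat bar) f"
    by (simp add: tuple_cat_def f' g')
  show "Cod (tuple_cat bar) (Comp (tuple_cat bar) g f) = Cod (tuple_cat bar) g"
    using HM_dcomp[OF kl] by (simp add: tuple_cat_def f' g' ns)
next
  fix f assume f: "f \<in> Ar (tuple_cat bar)"
  obtain F ms where f': "f = (F, ms)" by force
  have F: "F \<in> dhom (length ms) (length F)" using f f' Ar_iff by simp
  have "\<forall>fib \<in> set F. \<forall>(x, e) \<in> set fib. x < length ms"
    using F by (auto dest: dhom_fst_lt dhom_fst_lt')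
  then show "Comp (tuple_cat bar) f (Id (tuple_cat bar) (Dom (tuple_cat bar) f)) = f"
    by (simp add: tuple_cat_def f' dcomp_did_right)
  show "Comp (tuple_cat bar) (Id (tuple_cat bar) (Cod (tuple_cat bar) f)) f = f"
    by (simp add: tuple_cat_def f' HM_def dcomp_did_left[of F, simplified])
next
  fix f g h assume f: "f \<in> Ar (tuple_cat bar)" and g: "g \<in> Ar (tuple_cat bar)" and h: "h \<in> Ar (tuple_cat bar)"
    and fg: "Cod (tuple_cat bar) f = Dom (tuple_cat bar) g" and gh: "Cod (tuple_cat bar) g = Dom (tuple_cat bar) h"
  obtain F ms where f': "f = (F, ms)" by force
  obtain G ns where g': "g = (G, ns)" by force
  obtain H ks where h': "h = (H, ks)" by force
  have G: "G \<in> dhom (length ns) (length G)" using g g' Ar_iff by simp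
  have H: "H \<in> dhom (length ks) (length H)" using h h' Ar_iff by simp
  have ks: "ks = HM bar G ns" using gh g' h' by (simp add: tuple_cat_def)
  have "length ks = length G" by (simp add: ks HM_def)
  then have "\<forall>(k, e) \<in> set (concat H). k < length G" using H by (auto dest: dhom_fst_lt dhom_fst_lt')
  then show "Comp (tuple_cat bar) h (Comp (tuple_cat bar) g f) = Comp (tuple_cat bar) (Comp (tuple_cat bar) h g) f"
    by (simp add: tuple_cat_def f' g' h' dcomp_assoc)
qed


lemma Ar_iff': "X \<in> Ar (tuple_cat bar) \<longleftrightarrow> fst X \<in> dhom (length (snd X)) (length (fst X))"
  by (cases X) (simp add: Ar_iff)

lemma Dom_eq: "Dom (tuple_cat bar) X = snd X" by (simp add: tuple_cat_def case_prod_beta)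
lemma Cod_eq: "Cod (tuple_cat bar) X = HM bar (fst X) (snd X)" by (simp add: tuple_cat_def case_prod_beta)
lemma Dom_fun: "Dom (tuple_cat bar) = snd" by (rule ext) (simp add: Dom_eq)
lemma Cod_fun: "Cod (tuple_cat bar) = (\<lambda>(F, ms). HM bar F ms)" by (rule ext) (simp add: Cod_eq case_prod_beta)

lemma Id_eq: "Id (tuple_cat bar) ms = (did (length ms), ms)" by (simp add: tuple_cat_def)

lemma Ar_fib: "X \<in> Ar (tuple_cat bar) \<Longrightarrow> \<forall>fib\<in>set (fst X). \<forall>(x, e)\<in>set fib. x < length (snd X)"
  unfolding Ar_iff' by (auto dest: dhom_fst_lt')

theorem main: "Dcat_algebra (tuple_cat bar) tO tA"
  unfolding Dcat_algebra_def
proof (intro conjI allI impI ballI)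
  show "category (tuple_cat bar)" by (rule category_tuple)
next
  fix s xs show "tO s xs \<in> Ob (tuple_cat bar)" by (simp add: tuple_cat_def)
next
  fix s s' fs
  assume a: "s \<in> perms (length fs) \<and> s' \<in> perms (length fs) \<and> set fs \<subseteq> Ar (tuple_cat bar)"
  then have s: "s permutes {0..<length fs}" and s2: "s' permutes {0..<length fs}"
    and Ar: "\<And>k. k < length fs \<Longrightarrow> fs ! k \<in> Ar (tuple_cat bar)"
    by (auto simp: perms_def)
  have "mf (concat (fst (tA s s' fs))) = mset [0..<length (snd (tA s s' fs))]"
    by (rule tA_mf[OF s s2]) (use Ar in \<open>auto simp: Ar_iff' dhom_iff\<close>)
  then show "tA s s' fs \<in> Ar (tuple_cat bar)"
    unfolding Ar_iff' dhom_iff by simp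
  show "Dom (tuple_cat bar) (tA s s' fs) = tO s (map (Dom (tuple_cat bar)) fs)"
    by (simp add: Dom_eq Dom_fun tA_def tO_def)
  have "HM bar (fst (tA s s' fs)) (snd (tA s s' fs)) = tO s' (map (\<lambda>(F, ms). HM bar F ms) fs)"
    by (rule tA_Cod[OF s s2]) (use Ar Ar_fib in blast)
  then show "Cod (tuple_cat bar) (tA s s' fs) = tO s' (map (Cod (tuple_cat bar)) fs)"
    unfolding Cod_fun by (simp add: case_prod_beta)
next
  fix s xs assume "s \<in> perms (length xs) \<and> set xs \<subseteq> Ob (tuple_cat bar)"
  then have s: "s permutes {0..<length xs}" by (simp add: perms_def)
  have "Id (tuple_cat bar) = (\<lambda>ms. (did (length ms), ms))" by (rule ext) (simp add: Id_eq)
  then show "tA s s (map (Id (tuple_cat bar)) xs) = Id (tuple_cat bar) (tO s xs)"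
    using tA_id[OF s] by (simp add: tO_def)
next
  fix s s1 s2 fs gs
  assume a: "s \<in> perms (length fs) \<and> s1 \<in> perms (length fs) \<and> s2 \<in> perms (length fs) \<and>
         length gs = length fs \<and> set fs \<subseteq> Ar (tuple_cat bar) \<and> set gs \<subseteq> Ar (tuple_cat bar) \<and>
         map (Dom (tuple_cat bar)) gs = map (Cod (tuple_cat bar)) fs"
  then have s: "s permutes {0..<length fs}" and s1: "s1 permutes {0..<length fs}" and s2: "s2 permutes {0..<length fs}"
    and lg: "length gs = length fs"
    and gAr: "\<And>k. k < length fs \<Longrightarrow> gs ! k \<in> Ar (tuple_cat bar)"
    by (auto simp: perms_def)
  have dc: "map snd gs = map (\<lambda>(F, ms). HM bar F ms) fs"
    using a by (simp add: Dom_fun Cod_fun)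
  show "Comp (tuple_cat bar) (tA s1 s2 gs) (tA s s1 fs) = tA s s2 (map2 (Comp (tuple_cat bar)) gs fs)"
    by (rule tA_comp[OF s s1 s2 lg _ dc]) (use gAr Ar_fib in blast)
next
  fix x show "tO id [x] = x" by (rule tO_unit)
next
  fix f show "tA id id [f] = f" by (rule tA_unit)
next
  fix s r xs assume "s \<in> perms (length xs) \<and> r \<in> perms (length xs) \<and> set xs \<subseteq> Ob (tuple_cat bar)"
  then show "tO (s \<circ> r) xs = tO s (act r xs)" by (intro tO_equiv) (auto simp: perms_def)
next
  fix s s' r fs assume "s \<in> perms (length fs) \<and> s' \<in> perms (length fs) \<and> r \<in> perms (length fs) \<and> set fs \<subseteq> Ar (tuple_cat bar)"
  then show "tA (s \<circ> r) (s' \<circ> r) fs = tA s s' (act r fs)" by (intro tA_equiv) (auto simp: perms_def)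
next
  fix s ts xss assume "s \<in> perms (length xss) \<and> length ts = length xss \<and>
         (\<forall>i<length xss. ts ! i \<in> perms (length (xss ! i)) \<and> set (xss ! i) \<subseteq> Ob (tuple_cat bar))"
  then show "tO s (map2 tO ts xss) = tO (gamma s ts (map length xss)) (concat xss)"
    by (intro tO_assoc) (auto simp: perms_def)
next
  fix s s' ts ts' fss assume "s \<in> perms (length fss) \<and> s' \<in> perms (length fss) \<and>
         length ts = length fss \<and> length ts' = length fss \<and>
         (\<forall>i<length fss. ts ! i \<in> perms (length (fss ! i)) \<and> ts' ! i \<in> perms (length (fss ! i)) \<and>
              set (fss ! i) \<subseteq> Ar (tuple_cat bar))"
  then show "tA s s' (map (\<lambda>i. tA (ts ! i) (ts' ! i) (fss ! i)) [0..<length fss]) =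
         tA (gamma s ts (map length fss)) (gamma s' ts' (map length fss)) (concat fss)"
    by (intro tA_assoc) (auto simp: perms_def)
qed

end

theorem lemma2p3:
  fixes bar :: "'m::monoid_mult \<Rightarrow> 'm"
  assumes "involution bar"
  shows "\<exists>thO thA. Dcat_algebra (tuple_cat bar) thO thA"
  using main[OF assms] by blast

end
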